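(* Let $\mathbf{u}=(u_1,\dots,u_n)$ be a utility profile over $C$, $|C|=m$, and let $R\in\{R^C,R^V\}$. The game $G=(\mathcal{T},R,\mathbf{u})$ admits a PNE with a winning set of size at least $2$ if and only if one of the following conditions holds: (1) each candidate is ranked first by at most one voter, and moreover $\frac{1}{n}\sum_{i\in N}u_\ell(a_i)\ge\max_{i\in N\setminus\{\ell\}}u_\ell(a_i)$ for each $\ell\in N$; (2) there exists a set of candidates $X=\{c_{\ell_1},\dots,c_{\ell_k}\}$ with $2\le k\le\min(n/2,m)$ and a partition of the voters into $k$ groups $N_1,\dots,N_k$ of size $n/k$ each, such that for each $j\in[k]$ and each $i\in N_j$ we have $c_{\ell_j}\succ_i c$ for all $c\in X\setminus\{c_{\ell_j}\}$, and moreover $\frac{1}{k}\sum_{c\in X}u_i(c)\ge\max_{c\in X\setminus\{c_{\ell_j}\}}u_i(c)$. Further, if condition (1) holds, then $G$ has a PNE where each voter votes for her top candidate, and if condition (2) holds for some $X$, then $G$ has a PNE where each voter votes for her favorite candidate in $X$. The game $G$ has no other PNE with a winning set of size at least $2$.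
   Context: Let $C=\{c_1,\dots,c_m\}$ be candidates and $N=\{1,\dots,n\}$ voters; $[k]=\{1,\dots,k\}$. Each voter $i$ has an injective utility function $u_i:C\to\mathbb{N}$ inducing $c\succ_i c'$ iff $u_i(c)>u_i(c')$; $a_i$ is $i$'s top candidate. A ballot vector is $\mathbf{b}=(b_1,\dots,b_n)$ with $b_i\in C\cup\{\bot\}$ ($\bot$ = abstain); $(\mathbf{b}_{-i},b')$ replaces $b_i$ by $b'$. $\mathrm{sc}(c,\mathbf{b})=|\{i:b_i=c\}|$, the winning set $W(\mathbf{b})$ is the set of candidates with maximum score (equal to $C$ if all abstain). If $|W(\mathbf{b})|=1$ its element wins; otherwise under $R^C$ the winner is uniform on $W(\mathbf{b})$, and under $R^V$ a uniformly random voter $i\in N$ is chosen and the winner is $b_i$ if $b_i\in W(\mathbf{b})$, else $i$'s most preferred candidate in $W(\mathbf{b})$. Let $p_j(\mathbf{b})$ be the probability that $c_j$ wins. Fix $0<\varepsilon<\min\{1/m,1/n\}$. In the truth-biased setting $\mathcal{T}$, voter $i$'s utility is $U_i(\mathbf{b})=\sum_jp_j(\mathbf{b})u_i(c_j)$ if $b_i\in C\setminus\{a_i\}$, that plus $\varepsilon$ if $b_i=a_i$, and $-\infty$ if $b_i=\bot$. The game $(\mathcal{T},R,\mathbf{u})$ has players $N$ with action sets $C\cup\{\bot\}$; a PNE is a ballot vector $\mathbf{b}$ with $U_i(\mathbf{b})\ge U_i(\mathbf{b}_{-i},b')$ for all $i$ and all $b'$. *)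

theory Defs
  imports Complex_Main "HOL-Library.Extended_Real"
begin

(* Voters: finite type 'v (n = card (UNIV :: 'v set)); candidates: finite type 'c (m = card (UNIV :: 'c set)).
   Ballot: 'v => 'c option, None = abstain (bottom). *)

datatype rule = RC | RV

definition fav :: "('v \<Rightarrow> 'c \<Rightarrow> nat) \<Rightarrow> 'v \<Rightarrow> 'c set \<Rightarrow> 'c" where
  "fav u i X = (THE c. c \<in> X \<and> (\<forall>c'\<in>X. c' \<noteq> c \<longrightarrow> u i c' < u i c))"

definition top :: "('v \<Rightarrow> 'c \<Rightarrow> nat) \<Rightarrow> 'v \<Rightarrow> 'c" where
  "top u i = fav u i UNIV"

definition sc :: "('v::finite \<Rightarrow> 'c option) \<Rightarrow> 'c \<Rightarrow> nat" where
  "sc b c = card {i. b i = Some c}"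

definition W :: "('v::finite \<Rightarrow> 'c option) \<Rightarrow> 'c set" where
  "W b = {c. \<forall>c'. sc b c' \<le> sc b c}"

definition rv_outcome :: "('v::finite \<Rightarrow> 'c \<Rightarrow> nat) \<Rightarrow> ('v \<Rightarrow> 'c option) \<Rightarrow> 'v \<Rightarrow> 'c" where
  "rv_outcome u b i = (case b i of Some c \<Rightarrow> if c \<in> W b then c else fav u i (W b)
                                  | None \<Rightarrow> fav u i (W b))"

definition winprob :: "rule \<Rightarrow> ('v::finite \<Rightarrow> 'c::finite \<Rightarrow> nat) \<Rightarrow> ('v \<Rightarrow> 'c option) \<Rightarrow> 'c \<Rightarrow> real" where
  "winprob R u b c = (case R of
      RC \<Rightarrow> (if c \<in> W b then 1 / real (card (W b)) else 0)
    | RV \<Rightarrow> real (card {i. rv_outcome u b i = c}) / real (card (UNIV :: 'v set)))"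

definition EU :: "rule \<Rightarrow> ('v::finite \<Rightarrow> 'c::finite \<Rightarrow> nat) \<Rightarrow> ('v \<Rightarrow> 'c option) \<Rightarrow> 'v \<Rightarrow> real" where
  "EU R u b i = (\<Sum>c\<in>UNIV. winprob R u b c * real (u i c))"

definition TU :: "rule \<Rightarrow> real \<Rightarrow> ('v::finite \<Rightarrow> 'c::finite \<Rightarrow> nat) \<Rightarrow> ('v \<Rightarrow> 'c option) \<Rightarrow> 'v \<Rightarrow> ereal" where
  "TU R \<epsilon> u b i = (case b i of None \<Rightarrow> -\<infinity>
     | Some c \<Rightarrow> ereal (EU R u b i + (if c = top u i then \<epsilon> else 0)))"

definition PNE :: "rule \<Rightarrow> real \<Rightarrow> ('v::finite \<Rightarrow> 'c::finite \<Rightarrow> nat) \<Rightarrow> ('v \<Rightarrow> 'c option) \<Rightarrow> bool" where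
  "PNE R \<epsilon> u b = (\<forall>i b'. TU R \<epsilon> u (b(i := b')) i \<le> TU R \<epsilon> u b i)"

definition cond1 :: "('v::finite \<Rightarrow> 'c::finite \<Rightarrow> nat) \<Rightarrow> bool" where
  "cond1 u = ((\<forall>c. card {i. top u i = c} \<le> 1) \<and>
     (\<forall>l i. i \<noteq> l \<longrightarrow>
        (\<Sum>j\<in>UNIV. real (u l (top u j))) / real (card (UNIV :: 'v set)) \<ge> real (u l (top u i))))"

definition cond2 :: "('v::finite \<Rightarrow> 'c::finite \<Rightarrow> nat) \<Rightarrow> 'c set \<Rightarrow> bool" where
  "cond2 u X = (2 \<le> card X \<and> real (card X) \<le> min (real (card (UNIV :: 'v set)) / 2) (real (card (UNIV :: 'c set))) \<and>
     (\<exists>g :: 'v \<Rightarrow> 'c.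
        (\<forall>i. g i \<in> X) \<and>
        (\<forall>c\<in>X. real (card {i. g i = c}) = real (card (UNIV :: 'v set)) / real (card X)) \<and>
        (\<forall>i. \<forall>c\<in>X - {g i}. u i (g i) > u i c) \<and>
        (\<forall>i. \<forall>c\<in>X - {g i}.
           (\<Sum>d\<in>X. real (u i d)) / real (card X) \<ge> real (u i c))))"

end

theory Submission
  imports Defs
begin


lemma fav_unique:
  assumes "x \<in> X" "\<forall>c\<in>X. c \<noteq> x \<longrightarrow> u i c < u i x"
  shows "fav u i X = x"
  unfolding fav_def
proof (rule the_equality)
  show "x \<in> X \<and> (\<forall>c'\<in>X. c' \<noteq> x \<longrightarrow> u i c' < u i x)" using assms by blast
next
  fix y assume "y \<in> X \<and> (\<forall>c'\<in>X. c' \<noteq> y \<longrightarrow> u i c' < u i y)"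
  then show "y = x" using assms by (metis less_not_sym)
qed

lemma fav_spec:
  fixes u :: "'v \<Rightarrow> 'c::finite \<Rightarrow> nat"
  assumes "inj (u i)" "X \<noteq> {}"
  shows "fav u i X \<in> X \<and> (\<forall>c\<in>X. c \<noteq> fav u i X \<longrightarrow> u i c < u i (fav u i X))"
proof -
  have fin: "finite (u i ` X)" by simp
  obtain x where x: "x \<in> X" "u i x = Max (u i ` X)"
    using Max_in[OF fin] assms(2) by (metis empty_is_image imageE)
  have gt: "\<forall>c\<in>X. c \<noteq> x \<longrightarrow> u i c < u i x"
  proof (intro ballI impI)
    fix c assume c: "c \<in> X" "c \<noteq> x"
    have "u i c \<le> u i x" using x fin c by simp
    moreover have "u i c \<noteq> u i x" using assms(1) c(2) by (meson injD)
    ultimately show "u i c < u i x" by simp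
  qed
  with x have "fav u i X = x" by (intro fav_unique) auto
  with x gt show ?thesis by simp
qed

lemma top_spec:
  fixes u :: "'v \<Rightarrow> 'c::finite \<Rightarrow> nat"
  assumes "inj (u i)"
  shows "c \<noteq> top u i \<Longrightarrow> u i c < u i (top u i)"
  using fav_spec[of u i UNIV] assms unfolding top_def by auto

lemma fav_top:
  fixes u :: "'v \<Rightarrow> 'c::finite \<Rightarrow> nat"
  assumes "inj (u i)" "top u i \<in> X"
  shows "fav u i X = top u i"
  using assms top_spec[of u i] by (intro fav_unique) auto

lemma sc_upd_same:
  assumes "b i \<noteq> Some y"
  shows "sc (b(i := Some y)) y = Suc (sc b y)"
proof -
  have "{j. (b(i := Some y)) j = Some y} = insert i {j. b j = Some y}" by auto
  moreover have "i \<notin> {j. b j = Some y}" using assms by auto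
  ultimately show ?thesis unfolding sc_def by simp
qed

lemma sc_upd_other:
  assumes "c \<noteq> y"
  shows "sc (b(i := Some y)) c = (if b i = Some c then sc b c - 1 else sc b c)"
proof -
  have "{j. (b(i := Some y)) j = Some c} = {j. b j = Some c} - {i}" using assms by auto
  then show ?thesis unfolding sc_def by (simp add: card_Diff_singleton_if)
qed

lemma sc_upd_le:
  assumes "c \<noteq> y"
  shows "sc (b(i := Some y)) c \<le> sc b c"
  using sc_upd_other[OF assms, of b i] by simp

lemma W_single:
  assumes "\<forall>c. c \<noteq> y \<longrightarrow> sc b c < sc b y"
  shows "W b = {y}"
proof -
  have "x = y" if "\<forall>c'. sc b c' \<le> sc b x" for x
    using assms that by (metis not_le)
  moreover have "sc b c' \<le> sc b y" for c'
    using assms by (cases "c' = y") (auto simp: less_imp_le)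
  ultimately show ?thesis unfolding W_def by auto
qed

lemma W_nonempty:
  fixes b :: "'v::finite \<Rightarrow> 'c::finite option"
  shows "W b \<noteq> {}"
proof -
  have fin: "finite (range (sc b))" by simp
  obtain c where "sc b c = Max (range (sc b))"
    using Max_in[OF fin] by (metis UNIV_not_empty empty_is_image imageE)
  then have "c \<in> W b" unfolding W_def using fin by auto
  then show ?thesis by auto
qed

lemma W_same: "c \<in> W b \<Longrightarrow> d \<in> W b \<Longrightarrow> sc b c = sc b d"
  unfolding W_def by (simp add: le_antisym)

lemma card_pos: "0 < card (UNIV :: 'a::finite set)"
  by (simp add: card_gt_0_iff)

lemma rv_outcome_in_W:
  fixes u :: "'v::finite \<Rightarrow> 'c::finite \<Rightarrow> nat"
  assumes "inj (u j)"
  shows "rv_outcome u b j \<in> W b"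
  using fav_spec[of u j "W b"] assms W_nonempty[of b]
  unfolding rv_outcome_def by (auto split: option.splits)

lemma sum_fiber:
  fixes g :: "'a::finite \<Rightarrow> 'b::finite" and f :: "'b \<Rightarrow> real"
  assumes "\<forall>j. g j \<in> T"
  shows "(\<Sum>j\<in>UNIV. f (g j)) = (\<Sum>c\<in>T. real (card {j. g j = c}) * f c)"
proof -
  have "(\<Sum>j\<in>UNIV. f (g j)) = (\<Sum>c\<in>T. \<Sum>j\<in>{x. x \<in> UNIV \<and> g x = c}. f (g j))"
    by (rule sum.group[symmetric]) (use assms in auto)
  also have "\<dots> = (\<Sum>c\<in>T. real (card {j. g j = c}) * f c)"
    by (rule sum.cong) auto
  finally show ?thesis .
qed

lemma EU_RV:
  fixes u :: "'v::finite \<Rightarrow> 'c::finite \<Rightarrow> nat"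
  shows "EU RV u b i = (\<Sum>j\<in>UNIV. real (u i (rv_outcome u b j))) / real (card (UNIV :: 'v set))"
proof -
  have "(\<Sum>j\<in>UNIV. real (u i (rv_outcome u b j))) =
     (\<Sum>c\<in>UNIV. real (card {j. rv_outcome u b j = c}) * real (u i c))"
    by (rule sum_fiber) auto
  then show ?thesis unfolding EU_def winprob_def by (simp add: sum_divide_distrib)
qed

lemma EU_RC:
  fixes u :: "'v::finite \<Rightarrow> 'c::finite \<Rightarrow> nat"
  shows "EU RC u b i = (\<Sum>c\<in>W b. real (u i c)) / real (card (W b))"
proof -
  have "EU RC u b i = (\<Sum>c\<in>UNIV. if c \<in> W b then real (u i c) / real (card (W b)) else 0)"
    unfolding EU_def winprob_def by (intro sum.cong) auto
  also have "\<dots> = (\<Sum>c\<in>W b. real (u i c) / real (card (W b)))"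
    using sum.inter_restrict[of "UNIV :: 'c set" "\<lambda>c. real (u i c) / real (card (W b))" "W b"] by simp
  finally show ?thesis by (simp add: sum_divide_distrib)
qed

lemma EU_single:
  fixes u :: "'v::finite \<Rightarrow> 'c::finite \<Rightarrow> nat"
  assumes "W b = {f}"
  shows "EU R u b i = real (u i f)"
proof (cases R)
  case RC
  then show ?thesis using assms by (simp add: EU_RC)
next
  case RV
  have "\<And>j. rv_outcome u b j = f"
    using assms unfolding rv_outcome_def
    by (auto split: option.splits intro!: fav_unique)
  then show ?thesis using RV card_pos[where 'a='v] by (simp add: EU_RV)
qed



lemma sc_some: "sc (\<lambda>j. Some (g j)) c = card {j. g j = c}"
  unfolding sc_def by simp

lemma EU_balanced:
  fixes u :: "'v::finite \<Rightarrow> 'c::finite \<Rightarrow> nat"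
  assumes b: "b = (\<lambda>j. Some (g j))" and gW: "\<forall>j. g j \<in> W b"
  shows "EU R u b i = (\<Sum>j\<in>UNIV. real (u i (g j))) / real (card (UNIV::'v set))"
    and "(\<Sum>j\<in>UNIV. real (u i (g j))) / real (card (UNIV::'v set))
         = (\<Sum>c\<in>W b. real (u i c)) / real (card (W b))"
proof -
  obtain c0 where c0: "c0 \<in> W b" using W_nonempty[of b] by auto
  define s where "s = sc b c0"
  have scW: "card {j. g j = c} = s" if "c \<in> W b" for c
    using W_same[OF that c0] b sc_some[of g c] unfolding s_def by simp
  have "(\<Sum>j\<in>UNIV. real (u i (g j))) = (\<Sum>c\<in>W b. real (card {j. g j = c}) * real (u i c))"
    by (rule sum_fiber) (use gW in auto)
  also have "\<dots> = real s * (\<Sum>c\<in>W b. real (u i c))"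
    by (simp add: scW sum_distrib_left)
  finally have S: "(\<Sum>j\<in>UNIV. real (u i (g j))) = real s * (\<Sum>c\<in>W b. real (u i c))" .
  have "(\<Sum>j\<in>(UNIV::'v set). (\<lambda>_. 1::real) (g j)) = (\<Sum>c\<in>W b. real (card {j. g j = c}) * 1)"
    by (rule sum_fiber) (use gW in auto)
  then have N: "real (card (UNIV::'v set)) = real s * real (card (W b))"
    by (simp add: scW)
  have "real s \<noteq> 0"
  proof
    assume "real s = 0"
    then have "real (card (UNIV::'v set)) = 0" using N by simp
    then show False using card_pos[where 'a='v] by simp
  qed
  then show br: "(\<Sum>j\<in>UNIV. real (u i (g j))) / real (card (UNIV::'v set))
         = (\<Sum>c\<in>W b. real (u i c)) / real (card (W b))"
    unfolding S N by simp
  show "EU R u b i = (\<Sum>j\<in>UNIV. real (u i (g j))) / real (card (UNIV::'v set))"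
  proof (cases R)
    case RC
    then show ?thesis using br by (simp add: EU_RC)
  next
    case RV
    have "rv_outcome u b j = g j" for j
      using gW b unfolding rv_outcome_def by simp
    then show ?thesis using RV by (simp add: EU_RV)
  qed
qed

lemma W_inj:
  fixes h :: "'v::finite \<Rightarrow> 'c::finite"
  assumes "inj h"
  shows "W (\<lambda>j. Some (h j)) = range h"
proof -
  have s1: "sc (\<lambda>j. Some (h j)) c = (if c \<in> range h then 1 else 0)" for c
  proof (cases "c \<in> range h")
    case True
    then obtain j where "c = h j" by auto
    then have "{j'. h j' = c} = {j}" using assms by (auto dest: injD)
    then show ?thesis using True by (simp add: sc_some)
  next
    case False
    then have "{j'. h j' = c} = {}" by auto
    then show ?thesis using False by (simp add: sc_some)
  qed
  obtain j0 :: 'v where True by simp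
  show ?thesis unfolding W_def s1
    by (auto split: if_splits)
qed

lemma int_bound:
  fixes a N k :: nat and e :: real
  assumes "0 < k" "real a \<le> real N / real k + e" "real k * e < 1"
  shows "real a \<le> real N / real k"
proof -
  have "real k * real a \<le> real N + real k * e" using assms(1,2)
    by (simp add: field_simps)
  then have "real (k*a) < real (N + 1)" using assms(3) by simp
  then have "k * a \<le> N" by linarith
  then have "real k * real a \<le> real N" by (metis of_nat_le_iff of_nat_mult)
  then show ?thesis using assms(1) by (simp add: field_simps)
qed

lemma TU_Some: "b i = Some c \<Longrightarrow> TU R e u b i = ereal (EU R u b i + (if c = top u i then e else 0))"
  unfolding TU_def by simp

lemma lt_real: assumes "(a::nat) < b" shows "real a \<le> real b - 1"
proof -
  have "a + 1 \<le> b" using assms by simp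
  then have "real (a+1) \<le> real b" by (simp only: of_nat_le_iff)
  then show ?thesis by simp
qed

lemma key_bound:
  fixes u :: "'v::finite \<Rightarrow> 'c::finite \<Rightarrow> nat"
  assumes inj: "\<forall>i. inj (u i)" and n2: "card (UNIV::'v set) \<ge> 2"
    and eps: "e < 1 / real (card (UNIV::'v set))"
    and W2: "card (W b) \<ge> 2" and pos: "\<forall>c\<in>W b. sc b c \<ge> 1"
  shows "EU R u b i + e < real (u i (fav u i (W b)))"
proof -
  define f where "f = fav u i (W b)"
  define G where "G = u i f"
  define n where "n = card (UNIV::'v set)"
  have fs: "f \<in> W b" "\<And>c. c \<in> W b \<Longrightarrow> c \<noteq> f \<Longrightarrow> u i c < G"
    using fav_spec[of u i "W b"] inj W_nonempty[of b] unfolding f_def G_def by auto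
  have "W b - {f} \<noteq> {}"
  proof
    assume "W b - {f} = {}"
    then have "W b \<subseteq> {f}" by auto
    then have "card (W b) \<le> card {f}" by (intro card_mono) auto
    then have "card (W b) \<le> 1" by simp
    then show False using W2 by simp
  qed
  then obtain x where x: "x \<in> W b" "x \<noteq> f" by auto
  have n2': "1 / real n \<le> 1/2" using n2 unfolding n_def by (simp add: field_simps)
  show ?thesis
  proof (cases R)
    case RC
    define k where "k = card (W b)"
    have k2: "real k \<ge> 2" using W2 unfolding k_def by simp
    have "(\<Sum>c\<in>W b - {f}. real (u i c)) \<le> real (card (W b - {f})) * (real G - 1)"
      by (rule sum_bounded_above) (use fs in \<open>auto intro!: lt_real\<close>)
    moreover have "card (W b - {f}) = k - 1" using fs unfolding k_def by simp
    moreover have "(\<Sum>c\<in>W b. real (u i c)) = real G + (\<Sum>c\<in>W b - {f}. real (u i c))"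
      using fs unfolding G_def by (simp add: sum.remove)
    ultimately have S: "(\<Sum>c\<in>W b. real (u i c)) \<le> real G + (real k - 1) * (real G - 1)"
      using k2 by (simp add: of_nat_diff)
    have "EU R u b i = (\<Sum>c\<in>W b. real (u i c)) / real k" using RC by (simp add: EU_RC k_def)
    also have "\<dots> \<le> (real G + (real k - 1) * (real G - 1)) / real k"
      using S k2 by (simp add: divide_right_mono)
    also have "\<dots> = real G - 1 + 1 / real k" using k2 by (simp add: field_simps)
    also have "\<dots> \<le> real G - 1/2" using k2 by (simp add: field_simps)
    finally show ?thesis using eps n2' unfolding G_def f_def n_def by linarith
  next
    case RV
    have "sc b x \<ge> 1" using pos x by auto
    then have "{j. b j = Some x} \<noteq> {}" unfolding sc_def by (metis card.empty not_one_le_zero)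
    then obtain j0 where j0: "b j0 = Some x" by auto
    have out0: "rv_outcome u b j0 = x" using j0 x unfolding rv_outcome_def by simp
    have le: "u i (rv_outcome u b j) \<le> G" for j
      using rv_outcome_in_W[of u j b] inj fs by (cases "rv_outcome u b j = f") (auto simp: G_def less_imp_le)
    have "(\<Sum>j\<in>UNIV. u i (rv_outcome u b j)) < (\<Sum>j\<in>(UNIV::'v set). G)"
      by (rule sum_strict_mono_ex1) (use le out0 fs x in auto)
    then have "(\<Sum>j\<in>UNIV. u i (rv_outcome u b j)) + 1 \<le> n * G" unfolding n_def by simp
    then have "real (\<Sum>j\<in>UNIV. u i (rv_outcome u b j)) + 1 \<le> real n * real G"
      by (metis of_nat_1 of_nat_add of_nat_le_iff of_nat_mult)
    then have "(\<Sum>j\<in>UNIV. real (u i (rv_outcome u b j))) + 1 \<le> real n * real G" by simp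
    moreover have np: "real n > 0" using card_pos[where 'a='v] unfolding n_def by simp
    ultimately have "EU R u b i \<le> real G - 1 / real n" using RV
      by (simp add: EU_RV n_def[symmetric] field_simps)
    then show ?thesis using eps unfolding G_def f_def n_def by linarith
  qed
qed



lemma partA:
  fixes u :: "'v::finite \<Rightarrow> 'c::finite \<Rightarrow> nat"
  assumes inj: "\<forall>i. inj (u i)" and n2: "card (UNIV :: 'v set) \<ge> 2"
    and eps: "0 < \<epsilon>" "\<epsilon> < 1 / real (card (UNIV :: 'c set))" "\<epsilon> < 1 / real (card (UNIV :: 'v set))"
    and c1: "cond1 u"
  shows "PNE R \<epsilon> u (\<lambda>i. Some (top u i)) \<and> card (W (\<lambda>i. Some (top u i))) \<ge> 2"
proof -
  define n where "n = card (UNIV :: 'v set)"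
  define b where "b = (\<lambda>i. Some (top u i))"
  have c1a: "card {i'. top u i' = c} \<le> 1" for c using c1 unfolding cond1_def by blast
  have tinj: "inj (top u)"
  proof (rule injI)
    fix i j assume e: "top u i = top u j"
    have "card {i'. top u i' = top u i} \<le> Suc 0" using c1a by simp
    then show "i = j" using e by (subst (asm) card_le_Suc0_iff_eq) auto
  qed
  have Wb: "W b = range (top u)" using W_inj[OF tinj] unfolding b_def .
  have cardW: "card (W b) = n" unfolding Wb n_def by (rule card_image) (use tinj in \<open>simp add: inj_on_def inj_def\<close>)
  have avg: "real (u l (top u i)) \<le> (\<Sum>j\<in>UNIV. real (u l (top u j))) / real n" if "i \<noteq> l" for l i
    using c1 that unfolding cond1_def n_def by blast
  have EUb: "EU R u b l = (\<Sum>j\<in>UNIV. real (u l (top u j))) / real n" for l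
    using EU_balanced(1)[of b "top u" R u l] Wb unfolding b_def n_def by auto
  have "PNE R \<epsilon> u b"
    unfolding PNE_def
  proof (intro allI)
    fix l b'
    have TUb: "TU R \<epsilon> u b l = ereal (EU R u b l + \<epsilon>)" by (simp add: b_def TU_Some)
    show "TU R \<epsilon> u (b(l := b')) l \<le> TU R \<epsilon> u b l"
    proof (cases b')
      case None
      then show ?thesis unfolding TU_def by simp
    next
      case (Some c)
      show ?thesis
      proof (cases "c = top u l")
        case True
        then have "b(l := b') = b" using Some unfolding b_def by auto
        then show ?thesis by simp
      next
        case ctl: False
        show ?thesis
        proof (cases "c \<in> range (top u)")
          case True
          then obtain i where ci: "c = top u i" by auto
          with ctl have il: "i \<noteq> l" by auto
          have ne: "b l \<noteq> Some c" using ctl unfolding b_def by simp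
          have "sc b c \<ge> 1"
          proof -
            have "i \<in> {j. top u j = c}" using ci by simp
            then have "card {j. top u j = c} > 0" by (auto simp: card_gt_0_iff)
            then show ?thesis unfolding b_def sc_some by simp
          qed
          then have "W (b(l := Some c)) = {c}"
          proof -
            assume g1: "sc b c \<ge> 1"
            show ?thesis
            proof (rule W_single, intro allI impI)
              fix d assume "d \<noteq> c"
              then have "sc (b(l := Some c)) d \<le> sc b d" by (rule sc_upd_le)
              also have "\<dots> \<le> 1" using c1a unfolding b_def sc_some by simp
              also have "1 < sc (b(l := Some c)) c" using sc_upd_same[of b l c] ne g1 by simp
              finally show "sc (b(l := Some c)) d < sc (b(l := Some c)) c" .
            qed
          qed
          then have "EU R u (b(l := Some c)) l = real (u l c)" by (rule EU_single)
          then have "TU R \<epsilon> u (b(l := b')) l = ereal (real (u l c))"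
            using ctl Some by (simp add: TU_Some)
          moreover have "real (u l c) \<le> EU R u b l + \<epsilon>"
            using avg[OF il] EUb[of l] eps(1) ci by simp
          ultimately show ?thesis using TUb by simp
        next
          case False
          define h where "h = (top u)(l := c)"
          have b': "b(l := b') = (\<lambda>j. Some (h j))" using Some unfolding b_def h_def by auto
          have hinj: "inj h"
          proof (rule injI)
            fix j1 j2 assume e: "h j1 = h j2"
            show "j1 = j2"
            proof (cases "j1 = l"; cases "j2 = l")
              assume "j1 = l" "j2 \<noteq> l" then show ?thesis using e False unfolding h_def by (metis fun_upd_apply rangeI)
            next
              assume "j1 \<noteq> l" "j2 = l" then show ?thesis using e False unfolding h_def by (metis fun_upd_apply rangeI)
            next
              assume "j1 \<noteq> l" "j2 \<noteq> l" then show ?thesis using e tinj unfolding h_def by (simp add: injD)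
            qed simp
          qed
          have hW: "\<forall>j. h j \<in> W (b(l := b'))" unfolding b' W_inj[OF hinj] by auto
          have EU': "EU R u (b(l := b')) l = (\<Sum>j\<in>UNIV. real (u l (h j))) / real n"
            using EU_balanced(1)[OF b' hW] unfolding n_def .
          have "(\<Sum>j\<in>UNIV. u l (h j)) \<le> (\<Sum>j\<in>UNIV. u l (top u j))"
            by (rule sum_mono) (use top_spec[of u l c] inj ctl in \<open>auto simp: h_def less_imp_le\<close>)
          then have le: "(\<Sum>j\<in>UNIV. real (u l (h j))) \<le> (\<Sum>j\<in>UNIV. real (u l (top u j)))"
            by (metis (mono_tags) of_nat_le_iff of_nat_sum)
          have "EU R u (b(l := b')) l \<le> EU R u b l"
            unfolding EU' EUb using le by (simp add: divide_right_mono)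
          moreover have "TU R \<epsilon> u (b(l := b')) l = ereal (EU R u (b(l := b')) l)"
            using ctl Some by (simp add: TU_Some)
          ultimately show ?thesis using TUb eps(1) by simp
        qed
      qed
    qed
  qed
  then show ?thesis using cardW n2 unfolding b_def n_def by simp
qed



lemma partB:
  fixes u :: "'v::finite \<Rightarrow> 'c::finite \<Rightarrow> nat"
  assumes inj: "\<forall>i. inj (u i)" and n2: "card (UNIV :: 'v set) \<ge> 2"
    and eps: "0 < \<epsilon>" "\<epsilon> < 1 / real (card (UNIV :: 'c set))" "\<epsilon> < 1 / real (card (UNIV :: 'v set))"
    and c2: "cond2 u X"
  shows "PNE R \<epsilon> u (\<lambda>i. Some (fav u i X)) \<and> card (W (\<lambda>i. Some (fav u i X))) \<ge> 2"
proof -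
  define n where "n = card (UNIV :: 'v set)"
  define m where "m = card (UNIV :: 'c set)"
  define k where "k = card X"
  from c2 obtain g where k2: "2 \<le> k" and kle: "real k \<le> min (real n / 2) (real m)"
    and gX: "\<forall>i. g i \<in> X" and gc: "\<forall>c\<in>X. real (card {i. g i = c}) = real n / real k"
    and gmax: "\<forall>i. \<forall>c\<in>X - {g i}. u i (g i) > u i c"
    and gavg: "\<forall>i. \<forall>c\<in>X - {g i}. (\<Sum>d\<in>X. real (u i d)) / real k \<ge> real (u i c)"
    unfolding cond2_def k_def n_def m_def by blast
  have favg: "fav u i X = g i" for i using gX gmax by (intro fav_unique) auto
  define b where "b = (\<lambda>i. Some (g i))"
  have kpos: "0 < k" using k2 by simp
  have npos: "0 < n" using card_pos[where 'a='v] unfolding n_def .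
  obtain c0 where c0: "c0 \<in> X" using k2 unfolding k_def by fastforce
  define s where "s = card {j. g j = c0}"
  have scX: "card {j. g j = c} = s" if "c \<in> X" for c
    using gc that c0 unfolding s_def by (metis of_nat_eq_iff)
  have "real s = real n / real k" using gc c0 unfolding s_def by simp
  then have "real n = real s * real k" using kpos by (simp add: field_simps)
  then have N: "n = s * k" by (metis of_nat_eq_iff of_nat_mult)
  have "2 * k \<le> n" using kle by simp
  then have s2: "s \<ge> 2" using N kpos by (metis mult_le_cancel2 mult.commute)
  have scb: "sc b c = (if c \<in> X then s else 0)" for c
  proof (cases "c \<in> X")
    case True then show ?thesis using scX unfolding b_def sc_some by simp
  next
    case False then have "{j. g j = c} = {}" using gX by auto
    then show ?thesis using False unfolding b_def sc_some by simp
  qed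
  have WX: "W b = X"
  proof
    show "W b \<subseteq> X"
    proof
      fix c assume "c \<in> W b"
      then have "sc b c0 \<le> sc b c" unfolding W_def by simp
      then show "c \<in> X" using scb[of c] scb[of c0] c0 s2 by (auto split: if_splits)
    qed
    show "X \<subseteq> W b" unfolding W_def using scb by auto
  qed
  have gW: "\<forall>j. g j \<in> W b" using gX WX by simp
  have EUb1: "EU R u b i = (\<Sum>j\<in>UNIV. real (u i (g j))) / real n" for i
    using EU_balanced(1)[OF b_def gW] unfolding n_def .
  have EUb2: "EU R u b i = (\<Sum>c\<in>X. real (u i c)) / real k" for i
    using EU_balanced(1)[OF b_def gW, where R=R and u=u and i=i] EU_balanced(2)[OF b_def gW, where u=u and i=i]
    unfolding WX k_def n_def by simp
  have "PNE R \<epsilon> u b"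
    unfolding PNE_def
  proof (intro allI)
    fix i b'
    have TUb: "TU R \<epsilon> u b i = ereal (EU R u b i + (if g i = top u i then \<epsilon> else 0))"
      by (simp add: b_def TU_Some)
    have TUb_ge: "ereal (EU R u b i) \<le> TU R \<epsilon> u b i" using TUb eps(1) by simp
    have ne_top: "c \<noteq> top u i" if "c \<in> X - {g i}" for c
    proof
      assume "c = top u i"
      then have "fav u i X = c" using fav_top[of u i X] inj that by auto
      then show False using favg[of i] that by simp
    qed
    show "TU R \<epsilon> u (b(i := b')) i \<le> TU R \<epsilon> u b i"
    proof (cases b')
      case None
      then show ?thesis unfolding TU_def by simp
    next
      case (Some c)
      have ne: "b i \<noteq> Some c" if "c \<noteq> g i" using that unfolding b_def by simp
      show ?thesis
      proof (cases "c = g i")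
        case True
        then have "b(i := b') = b" using Some unfolding b_def by auto
        then show ?thesis by simp
      next
        case cg: False
        show ?thesis
        proof (cases "c \<in> X")
          case True
          have "W (b(i := Some c)) = {c}"
          proof (rule W_single, intro allI impI)
            fix d assume "d \<noteq> c"
            then have "sc (b(i := Some c)) d \<le> sc b d" by (rule sc_upd_le)
            also have "\<dots> \<le> s" using scb[of d] by simp
            also have "s < sc (b(i := Some c)) c" using sc_upd_same[of b i c] ne[OF cg] scb[of c] True by simp
            finally show "sc (b(i := Some c)) d < sc (b(i := Some c)) c" .
          qed
          then have "EU R u (b(i := Some c)) i = real (u i c)" by (rule EU_single)
          then have "TU R \<epsilon> u (b(i := b')) i = ereal (real (u i c))"
            using ne_top[of c] True cg Some by (simp add: TU_Some)
          moreover have "real (u i c) \<le> EU R u b i" using gavg True cg EUb2[of i] by simp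
          ultimately show ?thesis using TUb_ge by (metis ereal_less_eq(3) order_trans)
        next
          case cX: False
          define b2 where "b2 = b(i := Some c)"
          have sc2: "sc b2 d = (if d = c then 1 else if d = g i then s - 1 else if d \<in> X then s else 0)" for d
          proof -
            have "sc b c = 0" using scb cX by simp
            then have "sc b2 c = 1" using sc_upd_same[of b i c] ne[OF cg] unfolding b2_def by simp
            moreover have "d \<noteq> c \<Longrightarrow> sc b2 d = (if d = g i then s - 1 else if d \<in> X then s else 0)"
              using sc_upd_other[of d c b i] scb[of d] gX unfolding b2_def b_def by auto
            ultimately show ?thesis by auto
          qed
          obtain c1 where c1: "c1 \<in> X" "c1 \<noteq> g i"
          proof -
            have "\<not> X \<subseteq> {g i}"
            proof
              assume "X \<subseteq> {g i}"
              then have "card X \<le> card {g i}" by (intro card_mono) auto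
              then show False using k2 unfolding k_def by simp
            qed
            then show ?thesis using that by auto
          qed
          have W2: "W b2 = X - {g i}"
          proof
            have le: "sc b2 d \<le> s" for d using sc2[of d] s2 by auto
            have "sc b2 c1 = s" using sc2[of c1] c1 cX by auto
            then show "W b2 \<subseteq> X - {g i}"
              unfolding W_def using sc2 s2 cX by (auto split: if_splits)
            show "X - {g i} \<subseteq> W b2"
              unfolding W_def using sc2 le cX by auto
          qed
          have "EU R u b2 i + \<epsilon> \<le> EU R u b i"
          proof (cases R)
            case RC
            define G where "G = real (u i (g i))"
            define A where "A = (\<Sum>d\<in>X - {g i}. real (u i d))"
            have K2: "real k \<ge> 2" using k2 by simp
            have cardX1: "card (X - {g i}) = k - 1" using gX unfolding k_def by simp
            have "A \<le> real (card (X - {g i})) * (G - 1)"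
              unfolding A_def G_def
              by (rule sum_bounded_above) (use gmax in \<open>auto intro!: lt_real\<close>)
            then have A1: "A \<le> (real k - 1) * (G - 1)" using cardX1 kpos by (simp add: of_nat_diff)
            have SX: "(\<Sum>d\<in>X. real (u i d)) = G + A"
              unfolding A_def G_def by (rule sum.remove) (use gX in auto)
            have E2: "EU R u b2 i = A / (real k - 1)"
              using RC W2 cardX1 kpos unfolding A_def by (simp add: EU_RC of_nat_diff)
            have E1: "EU R u b i = (G + A) / real k" using EUb2[of i] SX by simp
            have "A / (real k - 1) + 1 / real k \<le> (G + A) / real k"
            proof -
              have "A / (real k - 1) + 1 / real k = (real k * A + (real k - 1)) / (real k * (real k - 1))"
                using K2 by (simp add: field_simps)
              also have "\<dots> \<le> ((real k - 1) * (G + A)) / (real k * (real k - 1))"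
                using A1 K2 by (intro divide_right_mono) (auto simp: algebra_simps)
              also have "\<dots> = (G + A) / real k" using K2 by (simp add: field_simps)
              finally show ?thesis .
            qed
            moreover have "\<epsilon> \<le> 1 / real k"
            proof -
              have "real k \<le> real m" using kle by simp
              then have "1 / real m \<le> 1 / real k" using kpos by (simp add: frac_le)
              then show ?thesis using eps(2) unfolding m_def by simp
            qed
            ultimately show ?thesis using E1 E2 by simp
          next
            case RV
            define out where "out j = rv_outcome u b2 j" for j
            have outW: "out j \<in> X - {g i}" for j
              using rv_outcome_in_W[of u j b2] inj W2 unfolding out_def by auto
            have le: "u i (out j) \<le> u i (g j)" for j
            proof (cases "out j = g j")
              case False
              have "g j = g i"
              proof (cases "j = i")
                case False
                then have "b2 j = Some (g j)" unfolding b2_def b_def by simp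
                then have "g j \<notin> W b2" using \<open>out j \<noteq> g j\<close> unfolding out_def rv_outcome_def by auto
                then show ?thesis using W2 gX by auto
              qed simp
              then show ?thesis using gmax outW[of j] by (simp add: less_imp_le)
            qed simp
            have lt: "u i (out i) < u i (g i)" using gmax outW[of i] by simp
            have "(\<Sum>j\<in>UNIV. u i (out j)) < (\<Sum>j\<in>UNIV. u i (g j))"
              by (rule sum_strict_mono_ex1) (use le lt in auto)
            then have "real (\<Sum>j\<in>UNIV. u i (out j)) + 1 \<le> real (\<Sum>j\<in>UNIV. u i (g j))"
              by (metis Suc_leI of_nat_Suc of_nat_le_iff add.commute)
            then have S: "(\<Sum>j\<in>UNIV. real (u i (out j))) + 1 \<le> (\<Sum>j\<in>UNIV. real (u i (g j)))" by simp
            have E2: "EU R u b2 i = (\<Sum>j\<in>UNIV. real (u i (out j))) / real n"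
              using RV unfolding out_def n_def by (simp add: EU_RV)
            have "EU R u b2 i + 1 / real n \<le> EU R u b i"
              unfolding E2 EUb1 using S npos by (simp add: divide_right_mono add_divide_distrib[symmetric])
            then show ?thesis using eps(3) unfolding n_def by simp
          qed
          moreover have "TU R \<epsilon> u (b(i := b')) i \<le> ereal (EU R u b2 i + \<epsilon>)"
            using Some eps(1) unfolding b2_def by (simp add: TU_Some)
          ultimately show ?thesis using TUb_ge by (metis ereal_less_eq(3) order_trans)
        qed
      qed
    qed
  qed
  moreover have "b = (\<lambda>i. Some (fav u i X))" using favg unfolding b_def by simp
  ultimately show ?thesis using WX k2 unfolding k_def by simp
qed



lemma partC:
  fixes u :: "'v::finite \<Rightarrow> 'c::finite \<Rightarrow> nat"
  assumes inj: "\<forall>i. inj (u i)" and n2: "card (UNIV :: 'v set) \<ge> 2"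
    and eps: "0 < \<epsilon>" "\<epsilon> < 1 / real (card (UNIV :: 'c set))" "\<epsilon> < 1 / real (card (UNIV :: 'v set))"
    and P: "PNE R \<epsilon> u b" and W2: "card (W b) \<ge> 2"
  shows "(cond1 u \<and> b = (\<lambda>i. Some (top u i))) \<or> (\<exists>X. cond2 u X \<and> b = (\<lambda>i. Some (fav u i X)))"
proof -
  define n where "n = card (UNIV :: 'v set)"
  define m where "m = card (UNIV :: 'c set)"
  have dev: "\<And>i b'. TU R \<epsilon> u (b(i := b')) i \<le> TU R \<epsilon> u b i" using P unfolding PNE_def by blast
  have noabs: "b i \<noteq> None" for i
  proof
    assume "b i = None"
    then have "TU R \<epsilon> u b i = -\<infinity>" unfolding TU_def by simp
    moreover obtain c :: 'c where True by simp
    have "TU R \<epsilon> u (b(i := Some c)) i \<noteq> -\<infinity>" unfolding TU_def by simp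
    ultimately show False using dev[of i "Some c"] by simp
  qed
  have pos: "\<forall>c\<in>W b. sc b c \<ge> 1"
  proof
    fix c assume c: "c \<in> W b"
    obtain i0 :: 'v where True by simp
    obtain c0 where c0: "b i0 = Some c0" using noabs[of i0] by auto
    have "{j. b j = Some c0} \<noteq> {}" using c0 by auto
    then have "sc b c0 \<ge> 1" unfolding sc_def by (simp add: Suc_leI card_gt_0_iff)
    moreover have "sc b c0 \<le> sc b c" using c unfolding W_def by simp
    ultimately show "sc b c \<ge> 1" by simp
  qed
  have Wne: "W b \<noteq> {}" using W_nonempty[of b] .
  have allfav: "b i = Some (fav u i (W b))" for i
  proof (rule ccontr)
    assume ne: "b i \<noteq> Some (fav u i (W b))"
    define f where "f = fav u i (W b)"
    obtain x where x: "b i = Some x" using noabs[of i] by auto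
    have fW: "f \<in> W b" using fav_spec[of u i "W b"] inj Wne unfolding f_def by auto
    have "W (b(i := Some f)) = {f}"
    proof (rule W_single, intro allI impI)
      fix c assume "c \<noteq> f"
      then have "sc (b(i := Some f)) c \<le> sc b c" by (rule sc_upd_le)
      also have "\<dots> \<le> sc b f" using fW unfolding W_def by simp
      also have "\<dots> < sc (b(i := Some f)) f" using sc_upd_same[of b i f] ne unfolding f_def by simp
      finally show "sc (b(i := Some f)) c < sc (b(i := Some f)) f" .
    qed
    then have "EU R u (b(i := Some f)) i = real (u i f)" by (rule EU_single)
    then have "TU R \<epsilon> u (b(i := Some f)) i = ereal (real (u i f) + (if f = top u i then \<epsilon> else 0))"
      by (simp add: TU_Some)
    moreover have "TU R \<epsilon> u b i = ereal (EU R u b i + (if x = top u i then \<epsilon> else 0))"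
      using x by (simp add: TU_Some)
    ultimately have "real (u i f) + (if f = top u i then \<epsilon> else 0) \<le> EU R u b i + (if x = top u i then \<epsilon> else 0)"
      using dev[of i "Some f"] by simp
    moreover have "EU R u b i + \<epsilon> < real (u i f)"
      using key_bound[OF inj n2 eps(3) W2 pos] unfolding f_def .
    ultimately show False using eps(1) by (auto split: if_splits)
  qed
  define g where "g i = fav u i (W b)" for i
  have bg: "b = (\<lambda>i. Some (g i))" using allfav unfolding g_def by auto
  have gW: "\<forall>j. g j \<in> W b" using fav_spec[of u _ "W b"] inj Wne unfolding g_def by auto
  have gmax: "\<And>j c. c \<in> W b \<Longrightarrow> c \<noteq> g j \<Longrightarrow> u j c < u j (g j)"
    using fav_spec[of u _ "W b"] inj Wne unfolding g_def by auto
  have scg: "sc b c = card {j. g j = c}" for c using bg sc_some[of g c] by simp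
  obtain c0 where c0: "c0 \<in> W b" using Wne by auto
  define s where "s = sc b c0"
  have scW: "card {j. g j = c} = s" if "c \<in> W b" for c
    using W_same[OF that c0] scg unfolding s_def by simp
  have scle: "sc b c \<le> s" for c using c0 unfolding W_def s_def by simp
  have "(\<Sum>j\<in>(UNIV::'v set). (\<lambda>_. 1::real) (g j)) = (\<Sum>c\<in>W b. real (card {j. g j = c}) * 1)"
    by (rule sum_fiber) (use gW in auto)
  then have "real n = real s * real (card (W b))" by (simp add: scW n_def)
  then have N: "n = s * card (W b)" by (metis of_nat_eq_iff of_nat_mult)
  have s1: "s \<ge> 1" using pos c0 unfolding s_def by auto
  have EUb: "EU R u b i = (\<Sum>j\<in>UNIV. real (u i (g j))) / real n" for i
    using EU_balanced(1)[OF bg gW] unfolding n_def .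
  have EUb2: "EU R u b i = (\<Sum>c\<in>W b. real (u i c)) / real (card (W b))" for i
    using EU_balanced(1)[OF bg gW, where R=R and u=u and i=i] EU_balanced(2)[OF bg gW, where u=u and i=i] by simp
  show ?thesis
  proof (cases "s = 1")
    case True
    have ginj: "inj g"
    proof (rule injI)
      fix j1 j2 assume e: "g j1 = g j2"
      have "card {j. g j = g j1} = 1" using scW gW True by simp
      then obtain z where "{j. g j = g j1} = {z}" by (meson card_1_singletonE)
      moreover have "j1 \<in> {j. g j = g j1}" "j2 \<in> {j. g j = g j1}" using e by auto
      ultimately show "j1 = j2" by auto
    qed
    have gtop: "g i = top u i" for i
    proof (rule ccontr)
      assume ne: "g i \<noteq> top u i"
      define t where "t = top u i"
      have tW: "t \<notin> W b"
      proof
        assume "t \<in> W b"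
        then have "fav u i (W b) = t" using fav_top[of u i "W b"] inj unfolding t_def by auto
        then show False using ne unfolding g_def t_def by simp
      qed
      define g' where "g' = g(i := t)"
      have b': "b(i := Some t) = (\<lambda>j. Some (g' j))" using bg unfolding g'_def by auto
      have g'inj: "inj g'"
      proof (rule injI)
        fix j1 j2 assume e: "g' j1 = g' j2"
        show "j1 = j2"
        proof (cases "j1 = i"; cases "j2 = i")
          assume "j1 = i" "j2 \<noteq> i" then show ?thesis using e gW tW unfolding g'_def by (metis fun_upd_apply)
        next
          assume "j1 \<noteq> i" "j2 = i" then show ?thesis using e gW tW unfolding g'_def by (metis fun_upd_apply)
        next
          assume "j1 \<noteq> i" "j2 \<noteq> i" then show ?thesis using e ginj unfolding g'_def by (simp add: injD)
        qed simp
      qed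
      have g'W: "\<forall>j. g' j \<in> W (b(i := Some t))" unfolding b' W_inj[OF g'inj] by auto
      have EU': "EU R u (b(i := Some t)) i = (\<Sum>j\<in>UNIV. real (u i (g' j))) / real n"
        using EU_balanced(1)[OF b' g'W] unfolding n_def .
      have "(\<Sum>j\<in>UNIV. u i (g j)) < (\<Sum>j\<in>UNIV. u i (g' j))"
        by (rule sum_strict_mono_ex1) (use top_spec[of u i "g i"] inj ne in \<open>auto simp: g'_def t_def\<close>)
      then have lt: "(\<Sum>j\<in>UNIV. real (u i (g j))) < (\<Sum>j\<in>UNIV. real (u i (g' j)))"
        by (metis (mono_tags) of_nat_less_iff of_nat_sum)
      have "TU R \<epsilon> u (b(i := Some t)) i = ereal (EU R u (b(i := Some t)) i + \<epsilon>)"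
        by (simp add: TU_Some t_def)
      moreover have "TU R \<epsilon> u b i = ereal (EU R u b i)" using bg ne by (simp add: TU_Some)
      ultimately have "EU R u (b(i := Some t)) i + \<epsilon> \<le> EU R u b i"
        using dev[of i "Some t"] by simp
      moreover have "EU R u b i < EU R u (b(i := Some t)) i"
        unfolding EU' EUb using lt card_pos[where 'a='v] unfolding n_def by (simp add: divide_strict_right_mono)
      ultimately show False using eps(1) by simp
    qed
    have gt: "g = top u" using gtop by auto
    have btop: "b = (\<lambda>i. Some (top u i))" using bg gt by simp
    have tinj: "inj (top u)" using ginj gt by simp
    have "cond1 u"
      unfolding cond1_def
    proof (intro conjI allI impI)
      fix c
      have "card {i. top u i = c} \<le> Suc 0"
        using tinj by (subst card_le_Suc0_iff_eq) (auto dest: injD)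
      then show "card {i. top u i = c} \<le> 1" by simp
    next
      fix l i :: 'v assume il: "i \<noteq> l"
      define c where "c = top u i"
      have ne: "c \<noteq> top u l" using tinj il unfolding c_def by (metis injD)
      have "W (b(l := Some c)) = {c}"
      proof (rule W_single, intro allI impI)
        fix d assume "d \<noteq> c"
        then have "sc (b(l := Some c)) d \<le> sc b d" by (rule sc_upd_le)
        also have "\<dots> \<le> 1" using scle True by simp
        also have "1 < sc (b(l := Some c)) c"
          using sc_upd_same[of b l c] ne btop scW[of c] gW True gt unfolding c_def scg by auto
        finally show "sc (b(l := Some c)) d < sc (b(l := Some c)) c" .
      qed
      then have "EU R u (b(l := Some c)) l = real (u l c)" by (rule EU_single)
      then have "TU R \<epsilon> u (b(l := Some c)) l = ereal (real (u l c))"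
        using ne by (simp add: TU_Some)
      moreover have "TU R \<epsilon> u b l = ereal (EU R u b l + \<epsilon>)" using btop by (simp add: TU_Some)
      ultimately have "real (u l c) \<le> EU R u b l + \<epsilon>" using dev[of l "Some c"] by simp
      then have "real (u l c) \<le> real (\<Sum>j\<in>UNIV. u l (top u j)) / real n + \<epsilon>"
        using EUb[of l] gt by simp
      then have "real (u l c) \<le> real (\<Sum>j\<in>UNIV. u l (top u j)) / real n"
        by (rule int_bound[rotated]) (use eps(3) card_pos[where 'a='v] in \<open>auto simp: n_def field_simps\<close>)
      then show "real (u l (top u i)) \<le> (\<Sum>j\<in>UNIV. real (u l (top u j))) / real (card (UNIV::'v set))"
        unfolding c_def n_def by simp
    qed
    then show ?thesis using btop by simp
  next
    case False
    then have s2: "s \<ge> 2" using s1 by simp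
    define X where "X = W b"
    define k where "k = card X"
    have "cond2 u X"
      unfolding cond2_def
    proof (intro conjI exI[of _ g] allI ballI)
      show "2 \<le> card X" using W2 unfolding X_def .
      have "2 * k \<le> n" using N s2 unfolding k_def X_def by simp
      then have "real k \<le> real n / 2" by simp
      moreover have "k \<le> m" unfolding k_def m_def by (rule card_mono) auto
      ultimately show "real (card X) \<le> min (real (card (UNIV::'v set)) / 2) (real (card (UNIV::'c set)))"
        unfolding k_def n_def m_def by simp
    next
      fix i show "g i \<in> X" using gW unfolding X_def by simp
    next
      fix c assume "c \<in> X"
      then show "real (card {i. g i = c}) = real (card (UNIV::'v set)) / real (card X)"
        using scW N W2 unfolding X_def n_def by auto
    next
      fix i c assume "c \<in> X - {g i}"
      then show "u i (g i) > u i c" using gmax unfolding X_def by simp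
    next
      fix i c assume c: "c \<in> X - {g i}"
      have ne: "b i \<noteq> Some c" using bg c by auto
      have ct: "c \<noteq> top u i"
      proof
        assume "c = top u i"
        then have "fav u i (W b) = c" using fav_top[of u i "W b"] inj c unfolding X_def by auto
        then show False using c unfolding g_def X_def by simp
      qed
      have "W (b(i := Some c)) = {c}"
      proof (rule W_single, intro allI impI)
        fix d assume "d \<noteq> c"
        then have "sc (b(i := Some c)) d \<le> sc b d" by (rule sc_upd_le)
        also have "\<dots> \<le> s" using scle .
        also have "s < sc (b(i := Some c)) c"
          using sc_upd_same[of b i c] ne scW[of c] c scg unfolding X_def by auto
        finally show "sc (b(i := Some c)) d < sc (b(i := Some c)) c" .
      qed
      then have "EU R u (b(i := Some c)) i = real (u i c)" by (rule EU_single)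
      then have "TU R \<epsilon> u (b(i := Some c)) i = ereal (real (u i c))"
        using ct by (simp add: TU_Some)
      moreover have "TU R \<epsilon> u b i = ereal (EU R u b i + (if g i = top u i then \<epsilon> else 0))"
        using bg by (simp add: TU_Some)
      ultimately have "real (u i c) \<le> EU R u b i + (if g i = top u i then \<epsilon> else 0)"
        using dev[of i "Some c"] by simp
      then have "real (u i c) \<le> EU R u b i + \<epsilon>" using eps(1) by (auto split: if_splits)
      then have "real (u i c) \<le> real (\<Sum>d\<in>X. u i d) / real k + \<epsilon>"
        using EUb2[of i] unfolding X_def k_def by simp
      moreover have "k \<le> m" unfolding k_def m_def by (rule card_mono) auto
      moreover have "0 < k" using W2 unfolding k_def X_def by simp
      moreover have "real m * \<epsilon> < 1" using eps(2) card_pos[where 'a='c] unfolding m_def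
        by (simp add: field_simps)
      moreover have "real k * \<epsilon> \<le> real m * \<epsilon>"
        using \<open>k \<le> m\<close> eps(1) by (intro mult_right_mono) auto
      ultimately have "real (u i c) \<le> real (\<Sum>d\<in>X. u i d) / real k"
        by (intro int_bound) auto
      then show "(\<Sum>d\<in>X. real (u i d)) / real (card X) \<ge> real (u i c)"
        unfolding k_def by simp
    qed
    moreover have "b = (\<lambda>i. Some (fav u i X))" using bg unfolding g_def X_def by simp
    ultimately show ?thesis by blast
  qed
qed


theorem theorem4:
  fixes u :: "'v::finite \<Rightarrow> 'c::finite \<Rightarrow> nat" and R :: rule and \<epsilon> :: real
  assumes inj: "\<forall>i. inj (u i)"
    and n2: "card (UNIV :: 'v set) \<ge> 2"
    and eps: "0 < \<epsilon>" "\<epsilon> < 1 / real (card (UNIV :: 'c set))" "\<epsilon> < 1 / real (card (UNIV :: 'v set))"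
  shows "((\<exists>b. PNE R \<epsilon> u b \<and> card (W b) \<ge> 2) \<longleftrightarrow> (cond1 u \<or> (\<exists>X. cond2 u X)))
    \<and> (cond1 u \<longrightarrow> PNE R \<epsilon> u (\<lambda>i. Some (top u i)))
    \<and> (\<forall>X. cond2 u X \<longrightarrow> PNE R \<epsilon> u (\<lambda>i. Some (fav u i X)))
    \<and> (\<forall>b. PNE R \<epsilon> u b \<and> card (W b) \<ge> 2 \<longrightarrow>
          (cond1 u \<and> b = (\<lambda>i. Some (top u i))) \<or>
          (\<exists>X. cond2 u X \<and> b = (\<lambda>i. Some (fav u i X))))"
proof -
  have A: "cond1 u \<Longrightarrow> PNE R \<epsilon> u (\<lambda>i. Some (top u i)) \<and> card (W (\<lambda>i. Some (top u i))) \<ge> 2"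
    by (rule partA[OF inj n2 eps])
  have B: "\<And>X. cond2 u X \<Longrightarrow> PNE R \<epsilon> u (\<lambda>i. Some (fav u i X)) \<and> card (W (\<lambda>i. Some (fav u i X))) \<ge> 2"
    by (rule partB[OF inj n2 eps])
  have C: "\<And>b. PNE R \<epsilon> u b \<Longrightarrow> card (W b) \<ge> 2 \<Longrightarrow>
     (cond1 u \<and> b = (\<lambda>i. Some (top u i))) \<or> (\<exists>X. cond2 u X \<and> b = (\<lambda>i. Some (fav u i X)))"
    by (rule partC[OF inj n2 eps])
  show ?thesis using A B C by blast
qed

end
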